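(* Let $G$ be a connected graph with no isolated vertices. If either (a) $\gamma_t(G)=\gamma_c(G)$, or (b) $\gamma_t(G)=\gamma_c(G)-1$, then $$\gamma_t(G) \ge \left\lceil \frac{3\gamma(G)+2\gamma_c(G)}{6}\right\rceil.$$
   Context: All graphs are finite, simple and undirected. A set $S\subseteq V(G)$ is a dominating set if every vertex not in $S$ is adjacent to some vertex of $S$; $\gamma(G)$ is the minimum size of a dominating set. A set $S$ is a total dominating set if every vertex of $G$ (including those in $S$) is adjacent to some vertex of $S$; $\gamma_t(G)$ is the minimum size of a total dominating set. A set $S$ is a connected dominating set if it is dominating and the subgraph induced by $S$ is connected; $\gamma_c(G)$ is the minimum size of a connected dominating set. *)

theory Defs
  imports Complex_Main
begin

definition simple_graph :: "'a set \<Rightarrow> ('a \<Rightarrow> 'a \<Rightarrow> bool) \<Rightarrow> bool" where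
  "simple_graph V E \<longleftrightarrow> finite V \<and> (\<forall>u v. E u v \<longrightarrow> E v u) \<and> (\<forall>u. \<not> E u u)
     \<and> (\<forall>u v. E u v \<longrightarrow> u \<in> V \<and> v \<in> V)"

definition connected_on :: "('a \<Rightarrow> 'a \<Rightarrow> bool) \<Rightarrow> 'a set \<Rightarrow> bool" where
  "connected_on E S \<longleftrightarrow> S \<noteq> {} \<and>
     (\<forall>u\<in>S. \<forall>v\<in>S. (\<lambda>x y. x \<in> S \<and> y \<in> S \<and> E x y)\<^sup>*\<^sup>* u v)"

definition no_isolated :: "'a set \<Rightarrow> ('a \<Rightarrow> 'a \<Rightarrow> bool) \<Rightarrow> bool" where
  "no_isolated V E \<longleftrightarrow> (\<forall>v\<in>V. \<exists>u\<in>V. E v u)"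

definition dominating :: "'a set \<Rightarrow> ('a \<Rightarrow> 'a \<Rightarrow> bool) \<Rightarrow> 'a set \<Rightarrow> bool" where
  "dominating V E S \<longleftrightarrow> S \<subseteq> V \<and> (\<forall>v\<in>V - S. \<exists>u\<in>S. E v u)"

definition total_dominating :: "'a set \<Rightarrow> ('a \<Rightarrow> 'a \<Rightarrow> bool) \<Rightarrow> 'a set \<Rightarrow> bool" where
  "total_dominating V E S \<longleftrightarrow> S \<subseteq> V \<and> (\<forall>v\<in>V. \<exists>u\<in>S. E v u)"

definition connected_dominating :: "'a set \<Rightarrow> ('a \<Rightarrow> 'a \<Rightarrow> bool) \<Rightarrow> 'a set \<Rightarrow> bool" where
  "connected_dominating V E S \<longleftrightarrow> dominating V E S \<and> connected_on E S"

definition domination_number :: "'a set \<Rightarrow> ('a \<Rightarrow> 'a \<Rightarrow> bool) \<Rightarrow> nat" where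
  "domination_number V E = Min {card S | S. dominating V E S}"

definition total_domination_number :: "'a set \<Rightarrow> ('a \<Rightarrow> 'a \<Rightarrow> bool) \<Rightarrow> nat" where
  "total_domination_number V E = Min {card S | S. total_dominating V E S}"

definition connected_domination_number :: "'a set \<Rightarrow> ('a \<Rightarrow> 'a \<Rightarrow> bool) \<Rightarrow> nat" where
  "connected_domination_number V E = Min {card S | S. connected_dominating V E S}"

end

theory Submission
  imports Defs
begin

theorem theorem2p8:
  fixes V :: "'a set" and E :: "'a \<Rightarrow> 'a \<Rightarrow> bool"
  assumes "simple_graph V E"
    and "connected_on E V"
    and "no_isolated V E"
    and "total_domination_number V E = connected_domination_number V E
         \<or> total_domination_number V E + 1 = connected_domination_number V E"
  shows "int (total_domination_number V E) \<ge>
         \<lceil>(3 * real (domination_number V E) + 2 * real (connected_domination_number V E)) / 6\<rceil>"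
proof -
  have fin: "finite V" using assms(1) unfolding simple_graph_def by blast
  have Vne: "V \<noteq> {}" using assms(2) unfolding connected_on_def by blast
  have irr: "\<And>u. \<not> E u u" using assms(1) unfolding simple_graph_def by blast
  have VT: "total_dominating V E V"
    using assms(3) unfolding total_dominating_def no_isolated_def by blast
  have finT: "finite {card S | S. total_dominating V E S}"
    by (rule finite_subset[of _ "{0..card V}"])
       (auto simp: total_dominating_def intro: card_mono[OF fin])
  have "total_domination_number V E \<in> {card S | S. total_dominating V E S}"
    unfolding total_domination_number_def
    by (rule Min_in[OF finT]) (use VT in blast)
  then obtain T where T: "total_dominating V E T" and cT: "total_domination_number V E = card T"
    by blast
  have finTT: "finite T" using T fin unfolding total_dominating_def by (meson finite_subset)
  have DT: "dominating V E T" using T unfolding total_dominating_def dominating_def by blast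
  have finD: "finite {card S | S. dominating V E S}"
    by (rule finite_subset[of _ "{0..card V}"])
       (auto simp: dominating_def intro: card_mono[OF fin])
  have g: "domination_number V E \<le> card T"
    unfolding domination_number_def by (rule Min_le[OF finD]) (use DT in blast)
  obtain v where v: "v \<in> V" using Vne by blast
  then obtain u where u: "u \<in> T" "E v u" using T unfolding total_dominating_def by blast
  have "u \<in> V" using u T unfolding total_dominating_def by blast
  then obtain w where w: "w \<in> T" "E u w" using T unfolding total_dominating_def by blast
  have "u \<noteq> w" using w irr by metis
  hence "{u, w} \<subseteq> T" "card {u,w} = 2" using u w by auto
  hence two: "2 \<le> card T" using card_mono[OF finTT] by metis
  have le: "(3 * real (domination_number V E) + 2 * real (connected_domination_number V E)) / 6
        \<le> real (total_domination_number V E)"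
    using assms(4) g two cT by auto
  show ?thesis using le by (simp add: ceiling_le_iff)
qed

end
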